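(* Every finite graph $G$ admits a strong $\mathbb{Q}$-emm.
   Context: Graphs may have loops and multiple edges. For a finite graph $G$ with oriented edges $e_i$, $H_1(G,\mathbb{Z})$ is its cycle group, $H^1(G,\mathbb{Z})$ its dual (cokernel of the coboundary $C^0\to\bigoplus\mathbb{Z}e_i^*$), and the image of $e_i^*$ in $H^1$ is the coedge $e_i^*$. A $\mathbb{Q}$-emm is $q\in\mathrm{Sym}^2H_1(G,\mathbb{Q})$, viewed as a quadratic form on $H^1(G,\mathbb{R})$, that is positive definite, satisfies $q(e_i^* )=1$ for every edge $e_i$ that is not a bridge, and $q(v)\ge1$ for all nonzero $v\in H^1(G,\mathbb{Z})$. It is strong if moreover $q(v)=1$ for $v\in H^1(G,\mathbb{Z})$ implies that $\pm v$ is a coedge. *)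

theory Defs
  imports Complex_Main "Graph_Theory.Digraph"
begin

(* A finite graph (loops and multiple edges allowed) with oriented edges is a
   fin_digraph G: vertices verts G, edges arcs G, edge e oriented from tail G e
   to head G e.  Chains/cochains on edges are functions 'e => _ (only values on
   arcs G matter). *)

inductive ureach :: "('v,'e) pre_digraph \<Rightarrow> 'e set \<Rightarrow> 'v \<Rightarrow> 'v \<Rightarrow> bool"
  for G F where
  refl: "x \<in> verts G \<Longrightarrow> ureach G F x x"
| step: "ureach G F x y \<Longrightarrow> e \<in> F \<Longrightarrow>
          (tail G e = y \<and> head G e = z) \<or> (head G e = y \<and> tail G e = z) \<Longrightarrow> ureach G F x z"

(* bridge: removing e disconnects its endpoints (i.e. increases the number of components) *)
definition is_bridge :: "('v,'e) pre_digraph \<Rightarrow> 'e \<Rightarrow> bool" where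
  "is_bridge G e \<longleftrightarrow> e \<in> arcs G \<and> \<not> ureach G (arcs G - {e}) (tail G e) (head G e)"

(* H_1(G,Q): rational 1-chains supported on arcs G with zero boundary *)
definition cycle_space_rat :: "('v,'e) pre_digraph \<Rightarrow> ('e \<Rightarrow> rat) set" where
  "cycle_space_rat G = {c. (\<forall>e. e \<notin> arcs G \<longrightarrow> c e = 0) \<and>
     (\<forall>x\<in>verts G. (\<Sum>e\<in>arcs G. (if head G e = x then c e else 0)
                                  - (if tail G e = x then c e else 0)) = 0)}"

(* Sym^2 H_1(G,Q), as symmetric tensors in H_1 \<otimes> H_1, i.e. symmetric matrices
   indexed by edges whose columns (hence rows) lie in H_1(G,Q) *)
definition sym2_H1 :: "('v,'e) pre_digraph \<Rightarrow> ('e \<Rightarrow> 'e \<Rightarrow> rat) set" where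
  "sym2_H1 G = {Q. (\<forall>e f. Q e f = Q f e) \<and> (\<forall>f. (\<lambda>e. Q e f) \<in> cycle_space_rat G)}"

definition cobdry_int :: "('v,'e) pre_digraph \<Rightarrow> ('e \<Rightarrow> int) set" where
  "cobdry_int G = {v. \<exists>f :: 'v \<Rightarrow> int. \<forall>e\<in>arcs G. v e = f (head G e) - f (tail G e)}"

definition cobdry_real :: "('v,'e) pre_digraph \<Rightarrow> ('e \<Rightarrow> real) set" where
  "cobdry_real G = {v. \<exists>f :: 'v \<Rightarrow> real. \<forall>e\<in>arcs G. v e = f (head G e) - f (tail G e)}"

(* q viewed as a quadratic form on cochains (descends to H^1(G,R)) *)
definition qform :: "('v,'e) pre_digraph \<Rightarrow> ('e \<Rightarrow> 'e \<Rightarrow> rat) \<Rightarrow> ('e \<Rightarrow> real) \<Rightarrow> real" where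
  "qform G Q v = (\<Sum>e\<in>arcs G. \<Sum>f\<in>arcs G. real_of_rat (Q e f) * v e * v f)"

definition coedge :: "'e \<Rightarrow> 'e \<Rightarrow> int" where
  "coedge e = (\<lambda>e'. if e' = e then 1 else 0)"

definition Q_emm :: "('v,'e) pre_digraph \<Rightarrow> ('e \<Rightarrow> 'e \<Rightarrow> rat) \<Rightarrow> bool" where
  "Q_emm G Q \<longleftrightarrow> Q \<in> sym2_H1 G
     \<and> (\<forall>v. v \<notin> cobdry_real G \<longrightarrow> qform G Q v > 0)
     \<and> (\<forall>e\<in>arcs G. \<not> is_bridge G e \<longrightarrow> qform G Q (\<lambda>x. of_int (coedge e x)) = 1)
     \<and> (\<forall>v :: 'e \<Rightarrow> int. v \<notin> cobdry_int G \<longrightarrow> qform G Q (\<lambda>x. of_int (v x)) \<ge> 1)"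

definition strong_Q_emm :: "('v,'e) pre_digraph \<Rightarrow> ('e \<Rightarrow> 'e \<Rightarrow> rat) \<Rightarrow> bool" where
  "strong_Q_emm G Q \<longleftrightarrow> Q_emm G Q \<and>
     (\<forall>v :: 'e \<Rightarrow> int. qform G Q (\<lambda>x. of_int (v x)) = 1 \<longrightarrow>
        (\<exists>e\<in>arcs G. (\<lambda>x. v x - coedge e x) \<in> cobdry_int G
                   \<or> (\<lambda>x. - v x - coedge e x) \<in> cobdry_int G))"

end

theory Submission
  imports Defs "HOL-Library.FuncSet"
begin



context fin_digraph begin

definition divg :: "('b \<Rightarrow> 'r::comm_ring) \<Rightarrow> 'a \<Rightarrow> 'r" where
  "divg T x = (\<Sum>e\<in>arcs G. (if head G e = x then T e else 0) - (if tail G e = x then T e else 0))"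

lemma divg_add: "divg (\<lambda>e. S e + T e) x = divg S x + divg T x"
  unfolding divg_def by (simp add: sum.distrib[symmetric] algebra_simps) (rule sum.cong; auto)

lemma divg_diff: "divg (\<lambda>e. S e - T e) x = divg S x - divg T x"
  unfolding divg_def by (simp add: sum_subtractf[symmetric] algebra_simps) (rule sum.cong; auto)

lemma divg_cmult: "divg (\<lambda>e. c * T e) x = c * divg T x"
  unfolding divg_def by (simp add: sum_distrib_left algebra_simps) (rule sum.cong; auto)

lemma divg_sum: "finite I \<Longrightarrow> divg (\<lambda>e. \<Sum>i\<in>I. T i e) x = (\<Sum>i\<in>I. divg (T i) x)"
  by (induction I rule: finite_induct) (simp_all add: divg_add divg_def)

lemma divg_of_int: "divg (\<lambda>e. of_int (T e)) x = of_int (divg T x)"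
  unfolding divg_def by (simp add: of_int_sum) (rule sum.cong; auto)

lemma telescope:
  "(\<Sum>e\<in>arcs G. T e * (p (head G e) - p (tail G e))) = (\<Sum>x\<in>verts G. p x * divg T x)"
proof -
  have "(\<Sum>x\<in>verts G. p x * divg T x)
     = (\<Sum>x\<in>verts G. \<Sum>e\<in>arcs G. (if head G e = x then T e * p x else 0) - (if tail G e = x then T e * p x else 0))"
    unfolding divg_def by (simp add: sum_distrib_left) (rule sum.cong; auto intro!: sum.cong simp: mult.commute)
  also have "\<dots> = (\<Sum>e\<in>arcs G. \<Sum>x\<in>verts G. (if head G e = x then T e * p x else 0) - (if tail G e = x then T e * p x else 0))"
    by (rule sum.swap)
  also have "\<dots> = (\<Sum>e\<in>arcs G. T e * (p (head G e) - p (tail G e)))"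
  proof (rule sum.cong)
    fix e assume e: "e \<in> arcs G"
    have "(\<Sum>x\<in>verts G. (if head G e = x then T e * p x else 0) - (if tail G e = x then T e * p x else 0))
        = (\<Sum>x\<in>verts G. (if head G e = x then T e * p x else 0)) - (\<Sum>x\<in>verts G. (if tail G e = x then T e * p x else 0))"
      by (rule sum_subtractf)
    also have "\<dots> = T e * p (head G e) - T e * p (tail G e)"
      using e by (simp add: sum.delta)
    finally show "(\<Sum>x\<in>verts G. (if head G e = x then T e * p x else 0) - (if tail G e = x then T e * p x else 0)) = T e * (p (head G e) - p (tail G e))"
      by (simp add: algebra_simps)
  qed simp
  finally show ?thesis by simp
qed

lemma telescope_zero:
  assumes "\<forall>x\<in>verts G. divg T x = 0"
  shows "(\<Sum>e\<in>arcs G. T e * (p (head G e) - p (tail G e))) = 0"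
  using assms by (simp add: telescope)

definition src :: "'b \<times> bool \<Rightarrow> 'a" where
  "src s = (if snd s then tail G (fst s) else head G (fst s))"
definition tgt :: "'b \<times> bool \<Rightarrow> 'a" where
  "tgt s = (if snd s then head G (fst s) else tail G (fst s))"

fun mwalk :: "('b \<Rightarrow> bool \<Rightarrow> bool) \<Rightarrow> 'a \<Rightarrow> ('b \<times> bool) list \<Rightarrow> 'a \<Rightarrow> bool" where
  "mwalk M x [] y = (x = y \<and> x \<in> verts G)"
| "mwalk M x (s # ws) y = (fst s \<in> arcs G \<and> M (fst s) (snd s) \<and> src s = x \<and> mwalk M (tgt s) ws y)"

lemma mwalk_start: "mwalk M x ws y \<Longrightarrow> x \<in> verts G"
  by (cases ws) (auto simp: src_def)

lemma mwalk_append: "mwalk M x (as @ bs) y \<longleftrightarrow> (\<exists>z. mwalk M x as z \<and> mwalk M z bs y)"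
  by (induction as arbitrary: x) (auto dest: mwalk_start)

inductive mreach :: "('b \<Rightarrow> bool \<Rightarrow> bool) \<Rightarrow> 'a \<Rightarrow> 'a \<Rightarrow> bool" for M where
  mrefl: "x \<in> verts G \<Longrightarrow> mreach M x x"
| mstep: "mreach M x y \<Longrightarrow> e \<in> arcs G \<Longrightarrow> M e d \<Longrightarrow> src (e,d) = y \<Longrightarrow> mreach M x (tgt (e,d))"

lemma mreach_walk: "mreach M x y \<Longrightarrow> \<exists>ws. mwalk M x ws y"
proof (induction rule: mreach.induct)
  case (mrefl x) then show ?case by (intro exI[of _ "[]"]) simp
next
  case (mstep x y e d)
  then obtain ws where "mwalk M x ws y" by blast
  moreover have "mwalk M y [(e,d)] (tgt (e,d))" using mstep
    by (auto simp: tgt_def)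
  ultimately show ?case using mwalk_append by blast
qed

definition stepvec :: "'b \<times> bool \<Rightarrow> 'b \<Rightarrow> int" where
  "stepvec s e = (if e = fst s then (if snd s then 1 else -1) else 0)"

definition walkvec :: "('b \<times> bool) list \<Rightarrow> 'b \<Rightarrow> int" where
  "walkvec ws e = sum_list (map (\<lambda>s. stepvec s e) ws)"

lemma divg_stepvec:
  assumes "fst s \<in> arcs G"
  shows "divg (stepvec s) z = (if z = tgt s then 1 else 0) - (if z = src s then 1 else 0)"
proof -
  have "divg (stepvec s) z = (\<Sum>e\<in>arcs G. if e = fst s then
      (if head G e = z then stepvec s e else 0) - (if tail G e = z then stepvec s e else 0) else 0)"
    unfolding divg_def by (rule sum.cong) (auto simp: stepvec_def)
  also have "\<dots> = (if head G (fst s) = z then stepvec s (fst s) else 0) - (if tail G (fst s) = z then stepvec s (fst s) else 0)"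
    using assms by (simp add: sum.delta')
  finally show ?thesis by (auto simp: stepvec_def src_def tgt_def)
qed

lemma divg_walkvec:
  "mwalk M x ws y \<Longrightarrow> divg (walkvec ws) z = (if z = y then 1 else 0) - (if z = x then 1 else 0)"
proof (induction ws arbitrary: x)
  case Nil then show ?case by (simp add: walkvec_def divg_def)
next
  case (Cons s ws)
  have "walkvec (s # ws) = (\<lambda>e. stepvec s e + walkvec ws e)"
    by (auto simp: walkvec_def)
  then have "divg (walkvec (s # ws)) z = divg (stepvec s) z + divg (walkvec ws) z"
    by (simp add: divg_add)
  with Cons.IH[of "tgt s"] Cons.prems show ?case by (auto simp add: divg_stepvec)
qed

lemma walkvec_distinct:
  "distinct (map fst ws) \<Longrightarrow> walkvec ws e \<in> {-1,0,1} \<and>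
    (walkvec ws e \<noteq> 0 \<longrightarrow> (\<exists>s\<in>set ws. fst s = e \<and> (walkvec ws e > 0 \<longleftrightarrow> snd s)))"
proof (induction ws)
  case Nil then show ?case by (simp add: walkvec_def)
next
  case (Cons s ws)
  have w: "walkvec (s # ws) e = stepvec s e + walkvec ws e" by (simp add: walkvec_def)
  show ?case
  proof (cases "e = fst s")
    case True
    then have "e \<notin> fst ` set ws" using Cons.prems by auto
    then have "walkvec ws e = 0" unfolding walkvec_def
      by (induction ws) (auto simp: stepvec_def)
    then show ?thesis using w True by (auto simp: stepvec_def)
  next
    case False
    then show ?thesis using w Cons by (auto simp: stepvec_def)
  qed
qed

lemma shortest_walk_distinct:
  assumes "mwalk M x ws y" "\<And>ws'. mwalk M x ws' y \<Longrightarrow> length ws \<le> length ws'"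
  shows "distinct (map fst ws)"
proof (rule ccontr)
  assume "\<not> distinct (map fst ws)"
  then obtain as a bs b cs where dec: "map fst ws = as @ [a] @ bs @ [a] @ cs"
    using not_distinct_decomp by blast
  then obtain us zs where u: "ws = us @ zs" "map fst zs = [a] @ bs @ [a] @ cs"
    by (auto simp: map_eq_append_conv)
  then obtain r1 zs' where z: "zs = r1 # zs'" "fst r1 = a" "map fst zs' = bs @ [a] @ cs"
    by (cases zs) auto
  then obtain vs ts where v: "zs' = vs @ ts" "map fst ts = [a] @ cs"
    by (auto simp: map_eq_append_conv)
  then obtain r2 cs' where t: "ts = r2 # cs'" "fst r2 = a"
    by (cases ts) auto
  define as' where "as' = us"
  define bs' where "bs' = vs"
  have ws: "ws = as' @ [r1] @ bs' @ [r2] @ cs'" using u z v t by (simp add: as'_def bs'_def)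
  have "fst r1 = fst r2" using z t by simp
  have "mwalk M x (as' @ ([r1] @ (bs' @ (r2 # cs')))) y" using assms(1) ws by simp
  then obtain z1 where w1: "mwalk M x as' z1" and r: "mwalk M z1 ([r1] @ (bs' @ (r2 # cs'))) y"
    using mwalk_append by blast
  from r obtain z2 where w2: "mwalk M z1 [r1] z2" and r': "mwalk M z2 (bs' @ (r2 # cs')) y"
    using mwalk_append by blast
  from r' obtain z3 where w3: "mwalk M z2 bs' z3" and w4: "mwalk M z3 (r2 # cs') y"
    using mwalk_append by blast
  show False
  proof (cases "snd r1 = snd r2")
    case True
    then have "src r2 = src r1" using \<open>fst r1 = fst r2\<close> by (simp add: src_def)
    then have "mwalk M z1 (r2 # cs') y" using w2 w4 by auto
    then have "mwalk M x (as' @ (r2 # cs')) y" using w1 mwalk_append by blast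
    with assms(2) ws show False by fastforce
  next
    case False
    then have "tgt r2 = src r1" using \<open>fst r1 = fst r2\<close> by (auto simp: src_def tgt_def)
    then have "mwalk M z1 cs' y" using w2 w4 by auto
    then have "mwalk M x (as' @ cs') y" using w1 mwalk_append by blast
    with assms(2) ws show False by fastforce
  qed
qed

lemma mreach_path:
  assumes "mreach M x y"
  shows "\<exists>T::'b\<Rightarrow>int. (\<forall>e. T e \<in> {-1,0,1}) \<and> (\<forall>e. T e \<noteq> 0 \<longrightarrow> e \<in> arcs G \<and> M e (T e > 0))
     \<and> (\<forall>z. divg T z = (if z = y then 1 else 0) - (if z = x then 1 else 0))"
proof -
  obtain ws0 where "mwalk M x ws0 y" using mreach_walk[OF assms] by blast
  then have ex: "\<exists>n ws. mwalk M x ws y \<and> length ws = n" by blast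
  obtain n where n: "\<exists>ws. mwalk M x ws y \<and> length ws = n"
     and nmin: "\<And>m. (\<exists>ws. mwalk M x ws y \<and> length ws = m) \<Longrightarrow> n \<le> m"
    using ex_has_least_nat[of "\<lambda>n. \<exists>ws. mwalk M x ws y \<and> length ws = n" _ id] ex
    by (metis id_apply)
  then obtain ws where ws: "mwalk M x ws y" "length ws = n" by blast
  have d: "distinct (map fst ws)"
    by (rule shortest_walk_distinct[OF ws(1)]) (use nmin ws(2) in blast)
  have inset: "\<forall>s\<in>set ws. fst s \<in> arcs G \<and> M (fst s) (snd s)"
    using ws(1) by (induction ws arbitrary: x) auto
  have c1: "\<forall>e. walkvec ws e \<in> {-1,0,1}" using walkvec_distinct[OF d] by blast
  have c2: "\<forall>e. walkvec ws e \<noteq> 0 \<longrightarrow> e \<in> arcs G \<and> M e (walkvec ws e > 0)"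
  proof (intro allI impI)
    fix e assume "walkvec ws e \<noteq> 0"
    then obtain s where "s \<in> set ws" "fst s = e" "walkvec ws e > 0 \<longleftrightarrow> snd s"
      using walkvec_distinct[OF d, of e] by blast
    then show "e \<in> arcs G \<and> M e (walkvec ws e > 0)" using inset by auto
  qed
  have c3: "\<forall>z. divg (walkvec ws) z = (if z = y then 1 else 0) - (if z = x then 1 else 0)"
    using divg_walkvec[OF ws(1)] by blast
  show ?thesis using c1 c2 c3 by blast
qed

end



context fin_digraph begin

definition Lam :: "('b \<Rightarrow> int) set" where
  "Lam = {Z. (\<forall>e. e \<notin> arcs G \<longrightarrow> Z e = 0) \<and> (\<forall>e. Z e \<in> {-1,0,1}) \<and> (\<forall>x\<in>verts G. divg Z x = 0)}"

definition supp :: "('b \<Rightarrow> int) \<Rightarrow> 'b set" where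
  "supp Z = {e \<in> arcs G. Z e \<noteq> 0}"

lemma finite_Lam: "finite Lam"
proof (rule inj_on_finite[where f = "\<lambda>Z. restrict Z (arcs G)" and B = "\<Pi>\<^sub>E e\<in>arcs G. {-1,0,1}"])
  show "inj_on (\<lambda>Z. restrict Z (arcs G)) Lam"
  proof (rule inj_onI)
    fix Z Z' assume "Z \<in> Lam" "Z' \<in> Lam" and eq: "restrict Z (arcs G) = restrict Z' (arcs G)"
    show "Z = Z'"
    proof
      fix e show "Z e = Z' e"
        using \<open>Z \<in> Lam\<close> \<open>Z' \<in> Lam\<close> fun_cong[OF eq, of e] by (auto simp: Lam_def split: if_splits)
    qed
  qed
  show "(\<lambda>Z. restrict Z (arcs G)) ` Lam \<subseteq> (\<Pi>\<^sub>E e\<in>arcs G. {-1,0,1})"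
    by (auto simp: Lam_def)
  show "finite (\<Pi>\<^sub>E e\<in>arcs G. {-1::int,0,1})" by (rule finite_PiE) auto
qed

lemma zero_Lam: "(\<lambda>e. 0) \<in> Lam"
  by (simp add: Lam_def divg_def)

lemma mreach_verts: "mreach M x y \<Longrightarrow> x \<in> verts G \<and> y \<in> verts G"
  by (induction rule: mreach.induct) (auto simp: tgt_def)

lemma ureach_mreach:
  assumes "F \<subseteq> arcs G" "ureach G F x y"
  shows "mreach (\<lambda>e d. e \<in> F) x y"
  using assms(2)
proof (induction rule: ureach.induct)
  case (refl x) then show ?case by (rule mrefl)
next
  case (step x y e z)
  from step.hyps(3) show ?case
  proof
    assume "tail G e = y \<and> head G e = z"
    then show ?thesis using mstep[OF step.IH, of e True] step.hyps(2) assms(1)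
      by (auto simp: src_def tgt_def)
  next
    assume "head G e = y \<and> tail G e = z"
    then show ?thesis using mstep[OF step.IH, of e False] step.hyps(2) assms(1)
      by (auto simp: src_def tgt_def)
  qed
qed

lemma divg_unit:
  assumes "e \<in> arcs G"
  shows "divg (\<lambda>e'. if e' = e then 1 else 0) z = (if z = head G e then 1 else 0) - (if z = tail G e then (1::int) else 0)"
proof -
  have "(\<lambda>e'. if e' = e then 1 else 0) = stepvec (e, True)" by (auto simp: stepvec_def)
  then show ?thesis using divg_stepvec[of "(e,True)" z] assms by (simp add: src_def tgt_def)
qed

lemma close_path:
  assumes e: "e \<in> arcs G" and B: "B \<subseteq> arcs G" "e \<notin> B"
    and r: "mreach (\<lambda>e' d. e' \<in> B) (head G e) (tail G e)"
  shows "\<exists>Z\<in>Lam. Z e = 1 \<and> (\<forall>e'. Z e' \<noteq> 0 \<longrightarrow> e' \<in> insert e B)"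
proof -
  obtain T :: "'b \<Rightarrow> int" where T1: "\<forall>e. T e \<in> {-1,0,1}"
    and T2: "\<forall>e'. T e' \<noteq> 0 \<longrightarrow> e' \<in> arcs G \<and> e' \<in> B"
    and T3: "\<forall>z. divg T z = (if z = tail G e then 1 else 0) - (if z = head G e then 1 else 0)"
    using mreach_path[OF r] by blast
  define Z where "Z = (\<lambda>e'. T e' + (if e' = e then 1 else 0))"
  have Te: "T e = 0" using T2 B by blast
  have "Z \<in> Lam"
    unfolding Lam_def
  proof (intro CollectI conjI allI impI ballI)
    fix e' show "e' \<notin> arcs G \<Longrightarrow> Z e' = 0" using T2 e by (auto simp: Z_def)
  next
    fix e' show "Z e' \<in> {-1,0,1}" using T1 Te by (auto simp: Z_def)
  next
    fix x assume "x \<in> verts G"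
    have "divg Z x = divg T x + divg (\<lambda>e'. if e' = e then 1 else 0) x"
      unfolding Z_def by (rule divg_add)
    then show "divg Z x = 0" using T3 divg_unit[OF e, of x] by auto
  qed
  moreover have "Z e = 1" using Te by (simp add: Z_def)
  moreover have "\<forall>e'. Z e' \<noteq> 0 \<longrightarrow> e' \<in> insert e B" using T2 by (auto simp: Z_def)
  ultimately show ?thesis by blast
qed

lemma sum_N:
  assumes N0: "N 0" and Nadd: "\<And>a b. N a \<Longrightarrow> N b \<Longrightarrow> N (a + b)"
  shows "(\<And>i. i \<in> I \<Longrightarrow> N (f i)) \<Longrightarrow> N (sum f I)"
  by (induction I rule: infinite_finite_induct) (auto simp: N0 Nadd)

lemma duality:
  fixes v :: "'b \<Rightarrow> 'r::comm_ring_1" and N :: "'r \<Rightarrow> bool"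
  assumes N0: "N 0" and Nadd: "\<And>a b. N a \<Longrightarrow> N b \<Longrightarrow> N (a + b)" and Nneg: "\<And>a. N a \<Longrightarrow> N (-a)"
    and hyp: "\<And>Z. Z \<in> Lam \<Longrightarrow> N (\<Sum>e\<in>arcs G. of_int (Z e) * v e)"
  shows "\<exists>p. \<forall>e\<in>arcs G. N (v e - (p (head G e) - p (tail G e)))"
proof -
  have "B \<subseteq> arcs G \<Longrightarrow> \<exists>p. \<forall>e\<in>B. N (v e - (p (head G e) - p (tail G e)))" for B
  proof (induction B rule: infinite_finite_induct)
    case (infinite A) then show ?case using finite_subset[of A "arcs G"] by simp
  next
    case empty then show ?case by auto
  next
    case (insert e B)
    then obtain p where p: "\<forall>e\<in>B. N (v e - (p (head G e) - p (tail G e)))" by auto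
    have e: "e \<in> arcs G" and B: "B \<subseteq> arcs G" using insert by auto
    show ?case
    proof (cases "mreach (\<lambda>e' d. e' \<in> B) (head G e) (tail G e)")
      case True
      obtain Z where Z: "Z \<in> Lam" "Z e = 1" "\<forall>e'. Z e' \<noteq> 0 \<longrightarrow> e' \<in> insert e B"
        using close_path[OF e B insert(2) True] by blast
      define r where "r = (\<lambda>e. v e - (p (head G e) - p (tail G e)))"
      have divZ: "\<forall>x\<in>verts G. divg Z x = 0" using Z(1) by (simp add: Lam_def)
      have s1: "(\<Sum>e'\<in>arcs G. of_int (Z e') * v e') =
          (\<Sum>e'\<in>arcs G. of_int (Z e') * r e') + (\<Sum>e'\<in>arcs G. of_int (Z e') * (p (head G e') - p (tail G e')))"
        by (simp add: r_def sum.distrib[symmetric] algebra_simps)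
      have s2: "(\<Sum>e'\<in>arcs G. of_int (Z e') * (p (head G e') - p (tail G e'))) = 0"
      proof -
        have "(\<Sum>e'\<in>arcs G. of_int (Z e') * (p (head G e') - p (tail G e'))) = (\<Sum>x\<in>verts G. p x * divg (\<lambda>e. of_int (Z e)) x)"
          by (rule telescope)
        also have "\<dots> = 0" using divZ by (simp add: divg_of_int)
        finally show ?thesis .
      qed
      have s3: "(\<Sum>e'\<in>arcs G. of_int (Z e') * r e') = r e + (\<Sum>e'\<in>arcs G - {e}. of_int (Z e') * r e')"
        using e Z(2) by (simp add: sum.remove)
      have s4: "N (\<Sum>e'\<in>arcs G - {e}. of_int (Z e') * r e')"
      proof (rule sum_N[of N, OF N0 Nadd])
        fix e' assume e': "e' \<in> arcs G - {e}"
        show "N (of_int (Z e') * r e')"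
        proof (cases "Z e' = 0")
          case True then show ?thesis using N0 by simp
        next
          case False
          then have "e' \<in> B" using Z(3) e' by auto
          then have "N (r e')" using p by (simp add: r_def)
          moreover have "Z e' = 1 \<or> Z e' = -1" using Z(1) False by (auto simp: Lam_def)
          ultimately show ?thesis using Nneg by auto
        qed
      qed
      have "N (\<Sum>e'\<in>arcs G. of_int (Z e') * v e')" by (rule hyp[OF Z(1)])
      then have "N (r e + (\<Sum>e'\<in>arcs G - {e}. of_int (Z e') * r e'))" using s1 s2 s3 by simp
      then have "N (r e + (\<Sum>e'\<in>arcs G - {e}. of_int (Z e') * r e') + - (\<Sum>e'\<in>arcs G - {e}. of_int (Z e') * r e'))"
        using Nadd Nneg s4 by blast
      then have "N (r e)" by simp
      then show ?thesis using p by (auto simp: r_def)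
    next
      case False
      define R where "R = {x. mreach (\<lambda>e' d. e' \<in> B) (head G e) x}"
      define c where "c = v e - (p (head G e) - p (tail G e))"
      define p' where "p' = (\<lambda>x. p x + (if x \<in> R then c else 0))"
      have hR: "head G e \<in> R" using e by (auto simp: R_def intro: mrefl)
      have tR: "tail G e \<notin> R" using False by (simp add: R_def)
      have cl: "head G e' \<in> R \<longleftrightarrow> tail G e' \<in> R" if "e' \<in> B" for e'
      proof
        assume "head G e' \<in> R"
        then show "tail G e' \<in> R" using mstep[of "\<lambda>e' d. e' \<in> B" "head G e" "head G e'" e' False] that B
          by (auto simp: R_def src_def tgt_def)
      next
        assume "tail G e' \<in> R"
        then show "head G e' \<in> R" using mstep[of "\<lambda>e' d. e' \<in> B" "head G e" "tail G e'" e' True] that B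
          by (auto simp: R_def src_def tgt_def)
      qed
      have "\<forall>e'\<in>insert e B. N (v e' - (p' (head G e') - p' (tail G e')))"
      proof
        fix e' assume "e' \<in> insert e B"
        then show "N (v e' - (p' (head G e') - p' (tail G e')))"
        proof
          assume "e' = e" then show ?thesis using hR tR N0 by (simp add: p'_def c_def)
        next
          assume "e' \<in> B" then show ?thesis using cl[of e'] p by (simp add: p'_def)
        qed
      qed
      then show ?thesis by blast
    qed
  qed
  then show ?thesis by blast
qed

end



context fin_digraph begin

definition deg :: "'b set \<Rightarrow> 'a \<Rightarrow> int" where
  "deg S x = (\<Sum>e\<in>S. (if head G e = x then 1 else 0) + (if tail G e = x then 1 else 0))"

definition E2 :: "'b set set" where
  "E2 = {S. S \<subseteq> arcs G \<and> (\<forall>x\<in>verts G. even (deg S x))}"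

definition sd :: "'b set \<Rightarrow> 'b set \<Rightarrow> 'b set" where
  "sd S T = (S - T) \<union> (T - S)"

lemma finite_E2: "finite E2"
  by (rule finite_subset[of _ "Pow (arcs G)"]) (auto simp: E2_def)

lemma empty_E2: "{} \<in> E2" by (simp add: E2_def deg_def)

lemma deg_split: "finite S \<Longrightarrow> deg S x = deg (S - T) x + deg (S \<inter> T) x"
proof -
  assume f: "finite S"
  have "deg S x = deg (S - (S \<inter> T)) x + deg (S \<inter> T) x"
    unfolding deg_def by (rule sum.subset_diff) (use f in auto)
  moreover have "S - (S \<inter> T) = S - T" by auto
  ultimately show ?thesis by simp
qed

lemma E2_sd: assumes "S \<in> E2" "T \<in> E2" shows "sd S T \<in> E2"
proof -
  have fS: "finite S" "finite T" using assms by (auto simp: E2_def intro: finite_subset)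
  have "deg (sd S T) x = deg (S - T) x + deg (T - S) x" for x
    unfolding sd_def deg_def by (rule sum.union_disjoint) (use fS in auto)
  moreover have "deg S x = deg (S - T) x + deg (S \<inter> T) x" "deg T x = deg (T - S) x + deg (T \<inter> S) x" for x
    using deg_split fS by auto
  ultimately have "deg (sd S T) x = deg S x + deg T x - 2 * deg (S \<inter> T) x" for x
    by (simp add: Int_commute)
  then show ?thesis using assms by (auto simp: E2_def sd_def)
qed

lemma sd_sd: "sd (sd S T) T = S" by (auto simp: sd_def)

lemma supp_E2: assumes "Z \<in> Lam" shows "supp Z \<in> E2"
proof -
  have Z: "\<forall>e. e \<notin> arcs G \<longrightarrow> Z e = 0" "\<forall>e. Z e \<in> {-1,0,1}" "\<forall>x\<in>verts G. divg Z x = 0"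
    using assms by (auto simp: Lam_def)
  have "even (deg (supp Z) x)" if x: "x \<in> verts G" for x
  proof -
    have "divg Z x = (\<Sum>e\<in>supp Z. (if head G e = x then Z e else 0) - (if tail G e = x then Z e else 0))"
      unfolding divg_def by (rule sum.mono_neutral_right) (auto simp: supp_def)
    then have "deg (supp Z) x = deg (supp Z) x - divg Z x" using Z x by simp
    also have "\<dots> = (\<Sum>e\<in>supp Z. ((if head G e = x then 1 else 0) + (if tail G e = x then 1 else 0))
          - ((if head G e = x then Z e else 0) - (if tail G e = x then Z e else 0)))"
      unfolding deg_def \<open>divg Z x = _\<close> by (simp add: sum_subtractf)
    also have "even \<dots>"
    proof (rule dvd_sum)
      fix e assume "e \<in> supp Z"
      then have "Z e = 1 \<or> Z e = -1" using Z(2) by (auto simp: supp_def)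
      then show "2 dvd ((if head G e = x then 1 else 0) + (if tail G e = x then 1 else 0)
          - ((if head G e = x then Z e else 0) - (if tail G e = x then Z e else 0)))"
        by auto
    qed
    finally show ?thesis .
  qed
  then show ?thesis by (auto simp: E2_def supp_def)
qed

lemma mreach_prepend:
  "mreach M y x \<Longrightarrow> e \<in> arcs G \<Longrightarrow> M e d \<Longrightarrow> tgt (e,d) = y \<Longrightarrow> mreach M (src (e,d)) x"
proof (induction rule: mreach.induct)
  case (mrefl x)
  have "src (e,d) \<in> verts G" using mrefl by (auto simp: src_def)
  then have "mreach M (src (e,d)) (src (e,d))" by (rule mreach.mrefl)
  from mreach.mstep[OF this mrefl.prems(1) mrefl.prems(2) HOL.refl] show ?case using mrefl.prems(3) by simp
next
  case (mstep x y e' d')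
  show ?case by (rule mreach.mstep[OF mstep.IH[OF mstep.prems] mstep.hyps(2-4)])
qed

lemma mreach_sym:
  assumes "\<And>e d. M e d = M e (\<not> d)"
  shows "mreach M x y \<Longrightarrow> mreach M y x"
proof (induction rule: mreach.induct)
  case (mrefl x) then show ?case by (rule mreach.mrefl)
next
  case (mstep x y e d)
  have "M e (\<not> d)" using mstep assms by metis
  moreover have "tgt (e, \<not> d) = y" using mstep by (auto simp: src_def tgt_def)
  ultimately have "mreach M (src (e, \<not> d)) x" using mreach_prepend[OF mstep.IH mstep.hyps(2)] by blast
  then show ?case by (auto simp: src_def tgt_def split: if_splits)
qed

lemma euler_lift: "S \<in> E2 \<Longrightarrow> \<exists>Z\<in>Lam. supp Z = S"
proof (induction "card S" arbitrary: S rule: less_induct)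
  case less
  have SA: "S \<subseteq> arcs G" and Sev: "\<forall>x\<in>verts G. even (deg S x)" using less.prems by (auto simp: E2_def)
  have fS: "finite S" using finite_subset[OF SA] by simp
  show ?case
  proof (cases "S = {}")
    case True then show ?thesis using zero_Lam by (intro bexI[of _ "\<lambda>e. 0"]) (auto simp: supp_def)
  next
    case False
    then obtain e0 where e0: "e0 \<in> S" by blast
    have e0A: "e0 \<in> arcs G" using e0 SA by auto
    have reach: "mreach (\<lambda>e d. e \<in> S - {e0}) (head G e0) (tail G e0)"
    proof (rule ccontr)
      assume nr: "\<not> ?thesis"
      define R where "R = {x. mreach (\<lambda>e d. e \<in> S - {e0}) (head G e0) x}"
      have RV: "R \<subseteq> verts G" using mreach_verts by (auto simp: R_def)
      have fR: "finite R" using finite_subset[OF RV] by simp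
      have hR: "head G e0 \<in> R" using e0A by (auto simp: R_def intro: mrefl)
      have tR: "tail G e0 \<notin> R" using nr by (simp add: R_def)
      have cl: "head G e \<in> R \<longleftrightarrow> tail G e \<in> R" if "e \<in> S - {e0}" for e
      proof
        assume "head G e \<in> R"
        then show "tail G e \<in> R" using mstep[of "\<lambda>e' d. e' \<in> S - {e0}" "head G e0" "head G e" e False] that SA
          by (auto simp: R_def src_def tgt_def)
      next
        assume "tail G e \<in> R"
        then show "head G e \<in> R" using mstep[of "\<lambda>e' d. e' \<in> S - {e0}" "head G e0" "tail G e" e True] that SA
          by (auto simp: R_def src_def tgt_def)
      qed
      have "(\<Sum>x\<in>R. deg (S - {e0}) x) = (\<Sum>e\<in>S - {e0}. \<Sum>x\<in>R. (if head G e = x then 1 else 0) + (if tail G e = x then 1 else 0))"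
        unfolding deg_def by (rule sum.swap)
      also have "\<dots> = (\<Sum>e\<in>S - {e0}. (if head G e \<in> R then 1 else 0) + (if tail G e \<in> R then 1 else 0))"
        using fR by (simp add: sum.distrib sum.delta')
      also have "even \<dots>"
        by (rule dvd_sum) (use cl in auto)
      finally have ev1: "even (\<Sum>x\<in>R. deg (S - {e0}) x)" .
      have "deg S x = deg (S - {e0}) x + ((if head G e0 = x then 1 else 0) + (if tail G e0 = x then 1 else 0))" for x
        unfolding deg_def using fS e0 by (simp add: sum.remove add.commute)
      then have "(\<Sum>x\<in>R. deg S x) = (\<Sum>x\<in>R. deg (S - {e0}) x) + (\<Sum>x\<in>R. (if head G e0 = x then 1 else 0) + (if tail G e0 = x then 1 else 0))"
        by (simp add: sum.distrib)
      also have "(\<Sum>x\<in>R. (if head G e0 = x then 1 else 0) + (if tail G e0 = x then 1 else 0)) = (1::int)"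
        using fR hR tR by (simp add: sum.distrib sum.delta)
      finally have "(\<Sum>x\<in>R. deg S x) = (\<Sum>x\<in>R. deg (S - {e0}) x) + 1" .
      moreover have "even (\<Sum>x\<in>R. deg S x)" by (rule dvd_sum) (use Sev RV in auto)
      ultimately show False using ev1 by simp
    qed
    obtain Z0 where Z0: "Z0 \<in> Lam" "Z0 e0 = 1" "\<forall>e'. Z0 e' \<noteq> 0 \<longrightarrow> e' \<in> insert e0 (S - {e0})"
      using close_path[OF e0A _ _ reach] SA by auto
    have sZ0: "supp Z0 \<subseteq> S" using Z0(3) e0 by (auto simp: supp_def)
    define S' where "S' = S - supp Z0"
    have "S' \<in> E2"
    proof -
      have "deg S x = deg S' x + deg (supp Z0) x" for x
        using deg_split[OF fS, of x "supp Z0"] sZ0 by (simp add: S'_def Int_absorb1)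
      then show ?thesis using supp_E2[OF Z0(1)] less.prems by (auto simp: E2_def S'_def)
    qed
    moreover have "card S' < card S"
      unfolding S'_def using fS e0 e0A Z0(2) by (intro psubset_card_mono) (auto simp: supp_def)
    ultimately obtain Z' where Z': "Z' \<in> Lam" "supp Z' = S'" using less.hyps by blast
    define Z where "Z = (\<lambda>e. Z0 e + Z' e)"
    have disj: "Z0 e = 0 \<or> Z' e = 0" for e
      using Z'(2) Z0(1) Z'(1) by (auto simp: S'_def supp_def Lam_def)
    have "Z \<in> Lam"
      unfolding Lam_def
    proof (intro CollectI conjI allI impI ballI)
      fix e show "e \<notin> arcs G \<Longrightarrow> Z e = 0" using Z0(1) Z'(1) by (auto simp: Z_def Lam_def)
    next
      fix e show "Z e \<in> {-1,0,1}" using Z0(1) Z'(1) disj[of e] by (auto simp: Z_def Lam_def)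
    next
      fix x assume "x \<in> verts G"
      then show "divg Z x = 0" using Z0(1) Z'(1) by (simp add: Z_def divg_add Lam_def)
    qed
    moreover have "supp Z = S"
    proof -
      have "Z x \<noteq> 0 \<longleftrightarrow> Z0 x \<noteq> 0 \<or> Z' x \<noteq> 0" for x using disj[of x] by (auto simp: Z_def)
      then have "supp Z = supp Z0 \<union> supp Z'" by (auto simp: supp_def)
      then show ?thesis using Z'(2) sZ0 by (auto simp: S'_def)
    qed
    ultimately show ?thesis by blast
  qed
qed

lemma nonbridge_E2:
  assumes e: "e \<in> arcs G" and nb: "\<not> is_bridge G e"
  shows "\<exists>S\<in>E2. e \<in> S"
proof -
  have u: "ureach G (arcs G - {e}) (tail G e) (head G e)" using nb e by (simp add: is_bridge_def)
  have "mreach (\<lambda>e' d. e' \<in> arcs G - {e}) (tail G e) (head G e)"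
    by (rule ureach_mreach[OF _ u]) auto
  then have "mreach (\<lambda>e' d. e' \<in> arcs G - {e}) (head G e) (tail G e)"
    by (rule mreach_sym[rotated]) simp
  then obtain Z where "Z \<in> Lam" "Z e = 1"
    using close_path[OF e, of "arcs G - {e}"] by auto
  then show ?thesis using supp_E2[of Z] e by (intro bexI[of _ "supp Z"]) (auto simp: supp_def)
qed

lemma half_count:
  assumes fH: "finite H" and cl: "\<And>S T. S \<in> H \<Longrightarrow> T \<in> H \<Longrightarrow> sd S T \<in> H"
    and add: "\<And>S T. S \<in> H \<Longrightarrow> T \<in> H \<Longrightarrow> \<phi> (sd S T) = (\<phi> S \<noteq> \<phi> T)"
    and S0: "S0 \<in> H" "\<phi> S0"
  shows "2 * card {S\<in>H. \<phi> S} = card H"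
proof -
  have "bij_betw (\<lambda>S. sd S S0) {S\<in>H. \<not> \<phi> S} {S\<in>H. \<phi> S}"
  proof (rule bij_betwI[where g = "\<lambda>S. sd S S0"])
    show "(\<lambda>S. sd S S0) \<in> {S \<in> H. \<not> \<phi> S} \<rightarrow> {S \<in> H. \<phi> S}" using cl add S0 by auto
    show "(\<lambda>S. sd S S0) \<in> {S \<in> H. \<phi> S} \<rightarrow> {S \<in> H. \<not> \<phi> S}" using cl add S0 by auto
  qed (auto simp: sd_sd)
  then have "card {S\<in>H. \<not> \<phi> S} = card {S\<in>H. \<phi> S}" by (rule bij_betw_same_card)
  moreover have "card H = card {S\<in>H. \<phi> S} + card {S\<in>H. \<not> \<phi> S}"
  proof -
    have eq: "{S\<in>H. \<phi> S} \<union> {S\<in>H. \<not> \<phi> S} = H" by auto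
    moreover have "card ({S\<in>H. \<phi> S} \<union> {S\<in>H. \<not> \<phi> S}) = card {S\<in>H. \<phi> S} + card {S\<in>H. \<not> \<phi> S}"
      by (rule card_Un_disjoint) (use fH in auto)
    then show ?thesis using eq by simp
  qed
  ultimately show ?thesis by simp
qed

end



context fin_digraph begin

definition conf :: "('b \<Rightarrow> int) \<Rightarrow> ('b \<Rightarrow> int) \<Rightarrow> bool" where
  "conf u Z \<longleftrightarrow> Z \<in> Lam \<and> (\<forall>e\<in>arcs G. u e \<noteq> 0 \<longrightarrow> Z e \<noteq> 0 \<longrightarrow> Z e = sgn (u e))"

lemma aug_step:
  fixes u :: "'b \<Rightarrow> int"
  assumes min: "\<And>p::'a\<Rightarrow>int. (\<Sum>e\<in>arcs G. \<bar>u e\<bar>) \<le> (\<Sum>e\<in>arcs G. \<bar>u e - (p (head G e) - p (tail G e))\<bar>)"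
    and Z: "conf u Z" and f: "f \<in> arcs G" "u f \<noteq> 0" "Z f = 0"
  shows "\<exists>Z'. conf u Z' \<and> Z' f \<noteq> 0 \<and> (\<forall>e\<in>arcs G. u e \<noteq> 0 \<longrightarrow> Z e \<noteq> 0 \<longrightarrow> Z' e \<noteq> 0)"
proof -
  have ZL: "Z \<in> Lam" and Zc: "\<forall>e\<in>arcs G. u e \<noteq> 0 \<longrightarrow> Z e \<noteq> 0 \<longrightarrow> Z e = sgn (u e)"
    using Z by (auto simp: conf_def)
  have Zv: "\<forall>e. Z e \<in> {-1,0,1}" "\<forall>e. e \<notin> arcs G \<longrightarrow> Z e = 0" "\<forall>x\<in>verts G. divg Z x = 0"
    using ZL by (auto simp: Lam_def)
  define d0 where "d0 = (u f > 0)"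
  define a where "a = src (f, d0)"
  define b where "b = tgt (f, d0)"
  define M where "M = (\<lambda>e d. e \<in> arcs G \<and> e \<noteq> f \<and>
      (if Z e \<noteq> 0 then (u e = 0 \<and> d = (Z e < 0)) else (u e \<noteq> 0 \<longrightarrow> d = (u e > 0))))"
  show ?thesis
  proof (cases "mreach M b a")
    case True
    obtain T :: "'b \<Rightarrow> int" where T1: "\<forall>e. T e \<in> {-1,0,1}"
      and T2: "\<forall>e. T e \<noteq> 0 \<longrightarrow> e \<in> arcs G \<and> M e (T e > 0)"
      and T3: "\<forall>z. divg T z = (if z = a then 1 else 0) - (if z = b then 1 else 0)"
      using mreach_path[OF True] by blast
    define s where "s = sgn (u f)"
    define Z' where "Z' = (\<lambda>e. Z e + T e + s * (if e = f then 1 else 0))"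
    have Tf: "T f = 0" using T2 by (auto simp: M_def)
    have TZ: "T e \<noteq> 0 \<Longrightarrow> Z e \<noteq> 0 \<Longrightarrow> T e = - Z e \<and> u e = 0" for e
      using T2[rule_format, of e] T1[rule_format, of e] Zv(1)[rule_format, of e] by (auto simp: M_def split: if_splits)
    have TZ2: "T e \<noteq> 0 \<Longrightarrow> Z e = 0 \<Longrightarrow> u e \<noteq> 0 \<Longrightarrow> T e = sgn (u e)" for e
      using T2[rule_format, of e] T1[rule_format, of e] by (auto simp: M_def split: if_splits)
    have s: "s = 1 \<or> s = -1" using f by (auto simp: s_def sgn_if)
    have "Z' \<in> Lam"
      unfolding Lam_def
    proof (intro CollectI conjI allI impI ballI)
      fix e show "e \<notin> arcs G \<Longrightarrow> Z' e = 0" using Zv(2) T2 f(1) by (auto simp: Z'_def)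
    next
      fix e show "Z' e \<in> {-1,0,1}"
      proof (cases "e = f")
        case True then show ?thesis using Tf f s by (auto simp: Z'_def)
      next
        case False
        then show ?thesis using TZ[of e] T1 Zv(1) by (cases "T e = 0"; cases "Z e = 0") (auto simp: Z'_def)
      qed
    next
      fix x assume x: "x \<in> verts G"
      have "divg Z' x = divg Z x + divg T x + s * divg (\<lambda>e. if e = f then 1 else 0) x"
        unfolding Z'_def by (simp add: divg_add divg_cmult)
      also have "\<dots> = 0"
        using Zv(3) x T3 divg_unit[OF f(1), of x] f(2)
        by (auto simp: s_def a_def b_def d0_def src_def tgt_def sgn_if)
      finally show "divg Z' x = 0" .
    qed
    moreover have "\<forall>e\<in>arcs G. u e \<noteq> 0 \<longrightarrow> Z' e \<noteq> 0 \<longrightarrow> Z' e = sgn (u e)"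
    proof (intro ballI impI)
      fix e assume e: "e \<in> arcs G" "u e \<noteq> 0" "Z' e \<noteq> 0"
      show "Z' e = sgn (u e)"
      proof (cases "e = f")
        case True then show ?thesis using Tf f by (simp add: Z'_def s_def)
      next
        case False
        show ?thesis
        proof (cases "T e = 0")
          case True then show ?thesis using Zc e False by (simp add: Z'_def)
        next
          case False2: False
          then have "Z e = 0" using TZ e(2) by blast
          then show ?thesis using TZ2[OF False2 _ e(2)] False by (simp add: Z'_def)
        qed
      qed
    qed
    moreover have "Z' f \<noteq> 0" using Tf f s by (auto simp: Z'_def)
    moreover have "\<forall>e\<in>arcs G. u e \<noteq> 0 \<longrightarrow> Z e \<noteq> 0 \<longrightarrow> Z' e \<noteq> 0"
    proof (intro ballI impI)
      fix e assume e: "e \<in> arcs G" "u e \<noteq> 0" "Z e \<noteq> 0"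
      then have "e \<noteq> f" using f by auto
      moreover have "T e = 0" using TZ e by blast
      ultimately show "Z' e \<noteq> 0" using e by (simp add: Z'_def)
    qed
    ultimately show ?thesis by (auto simp: conf_def)
  next
    case False
    define R where "R = {x. mreach M b x}"
    have bV: "b \<in> verts G" using f by (auto simp: b_def tgt_def)
    have bR: "b \<in> R" using bV by (auto simp: R_def intro: mrefl)
    have aR: "a \<notin> R" using False by (simp add: R_def)
    have clT: "tail G e \<in> R \<Longrightarrow> M e True \<Longrightarrow> head G e \<in> R" for e
      using mstep[of M b "tail G e" e True] by (auto simp: R_def M_def src_def tgt_def)
    have clF: "head G e \<in> R \<Longrightarrow> M e False \<Longrightarrow> tail G e \<in> R" for e
      using mstep[of M b "head G e" e False] by (auto simp: R_def M_def src_def tgt_def)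
    define p :: "'a \<Rightarrow> int" where "p = (\<lambda>x. if x \<in> R then 1 else 0)"
    define c where "c = (\<lambda>e. p (head G e) - p (tail G e))"
    define B where "B = (\<lambda>e. - (Z e * c e) - (if u e \<noteq> 0 \<and> Z e = 0 then sgn (u e) * c e else 0))"
    have c3: "c e \<in> {-1,0,1}" for e by (auto simp: c_def p_def)
    have cfv: "c f = sgn (u f)"
    proof (cases "u f > 0")
      case True
      then have "a = tail G f" "b = head G f" by (simp_all add: a_def b_def d0_def src_def tgt_def)
      then show ?thesis using aR bR True by (simp add: c_def p_def)
    next
      case False
      then have "a = head G f" "b = tail G f" by (simp_all add: a_def b_def d0_def src_def tgt_def)
      then show ?thesis using aR bR False f(2) by (simp add: c_def p_def sgn_if)
    qed
    have DB: "\<bar>u e - c e\<bar> - \<bar>u e\<bar> \<le> B e" if e: "e \<in> arcs G" for e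
    proof (cases "Z e = 0")
      case Z0: True
      show ?thesis
      proof (cases "u e = 0")
        case True
        have "e = f \<or> (M e True \<and> M e False)" using Z0 True e by (auto simp: M_def)
        then have "c e = 0" using True f clT clF by (auto simp: c_def p_def)
        then show ?thesis using True Z0 by (simp add: B_def)
      next
        case False
        have "sgn (u e) * c e \<ge> 0 \<and> \<bar>u e - c e\<bar> - \<bar>u e\<bar> = - (sgn (u e) * c e)"
        proof (cases "e = f")
          case True
          then show ?thesis using cfv False by (auto simp: sgn_if)
        next
          case ef: False
          show ?thesis
          proof (cases "u e > 0")
            case True
            then have "M e True" using Z0 e ef by (auto simp: M_def)
            then have "c e \<in> {0,1}" using clT c3[of e] by (auto simp: c_def p_def split: if_splits)
            then show ?thesis using True by auto
          next
            case False2: False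
            then have "M e False" using Z0 e ef False by (auto simp: M_def)
            then have "c e \<in> {-1,0}" using clF c3[of e] by (auto simp: c_def p_def split: if_splits)
            then show ?thesis using False2 False by auto
          qed
        qed
        then show ?thesis using Z0 False by (simp add: B_def)
      qed
    next
      case Z0: False
      have ef: "e \<noteq> f" using Z0 f by auto
      show ?thesis
      proof (cases "u e = 0")
        case True
        show ?thesis
        proof (cases "Z e = 1")
          case True2: True
          then have "M e False" using True e ef by (auto simp: M_def)
          then have "c e \<in> {-1,0}" using clF c3[of e] by (auto simp: c_def p_def split: if_splits)
          then show ?thesis using True True2 by (auto simp: B_def)
        next
          case False2: False
          then have "Z e = -1" using Zv(1) Z0 by auto
          then have "M e True" using True e ef by (auto simp: M_def)
          then have "c e \<in> {0,1}" using clT c3[of e] by (auto simp: c_def p_def split: if_splits)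
          then show ?thesis using True \<open>Z e = -1\<close> by (auto simp: B_def)
        qed
      next
        case False
        then have "Z e = sgn (u e)" using Zc e Z0 by auto
        then show ?thesis using False c3[of e] Z0
          by (cases "u e > 0") (auto simp: B_def sgn_if)
      qed
    qed
    have nonneg: "0 \<le> (if u e \<noteq> 0 \<and> Z e = 0 then sgn (u e) * c e else 0)" if e: "e \<in> arcs G" for e
    proof (cases "u e \<noteq> 0 \<and> Z e = 0")
      case True
      have "sgn (u e) * c e \<ge> 0"
      proof (cases "e = f")
        case True2: True
        then show ?thesis using cfv True by (auto simp: sgn_if)
      next
        case ef: False
        show ?thesis
        proof (cases "u e > 0")
          case True3: True
          then have "M e True" using True e ef by (auto simp: M_def)
          then have "c e \<in> {0,1}" using clT c3[of e] by (auto simp: c_def p_def split: if_splits)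
          then show ?thesis using True3 by auto
        next
          case False3: False
          then have "M e False" using True e ef by (auto simp: M_def)
          then have "c e \<in> {-1,0}" using clF c3[of e] by (auto simp: c_def p_def split: if_splits)
          then show ?thesis using False3 True by (auto simp: sgn_if)
        qed
      qed
      then show ?thesis using True by simp
    qed auto
    have cf: "(if u f \<noteq> 0 \<and> Z f = 0 then sgn (u f) * c f else 0) = 1"
      using cfv f by (auto simp: sgn_if)
    have sumZc: "(\<Sum>e\<in>arcs G. Z e * c e) = 0"
      unfolding c_def using telescope_zero[of Z p] Zv(3) by simp
    have "(\<Sum>e\<in>arcs G. (if u e \<noteq> 0 \<and> Z e = 0 then sgn (u e) * c e else 0)) \<ge> 1"
    proof -
      have "(if u f \<noteq> 0 \<and> Z f = 0 then sgn (u f) * c f else 0) \<le> (\<Sum>e\<in>arcs G. (if u e \<noteq> 0 \<and> Z e = 0 then sgn (u e) * c e else 0))"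
        by (rule member_le_sum[OF f(1)]) (use nonneg in auto)
      then show ?thesis using cf by linarith
    qed
    then have "(\<Sum>e\<in>arcs G. B e) \<le> -1"
      unfolding B_def using sumZc by (simp add: sum_subtractf sum_negf)
    moreover have "(\<Sum>e\<in>arcs G. \<bar>u e - c e\<bar> - \<bar>u e\<bar>) \<le> (\<Sum>e\<in>arcs G. B e)"
      by (rule sum_mono) (rule DB)
    ultimately have "(\<Sum>e\<in>arcs G. \<bar>u e - c e\<bar>) < (\<Sum>e\<in>arcs G. \<bar>u e\<bar>)"
      by (simp add: sum_subtractf)
    moreover have "(\<Sum>e\<in>arcs G. \<bar>u e\<bar>) \<le> (\<Sum>e\<in>arcs G. \<bar>u e - c e\<bar>)"
      using min[of p] unfolding c_def .
    ultimately have False by linarith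
    then show ?thesis ..
  qed
qed

lemma aug:
  fixes u :: "'b \<Rightarrow> int"
  assumes min: "\<And>p::'a\<Rightarrow>int. (\<Sum>e\<in>arcs G. \<bar>u e\<bar>) \<le> (\<Sum>e\<in>arcs G. \<bar>u e - (p (head G e) - p (tail G e))\<bar>)"
  shows "\<exists>Z\<in>Lam. (\<Sum>e\<in>arcs G. Z e * u e) = (\<Sum>e\<in>arcs G. \<bar>u e\<bar>)"
proof -
  define F where "F = {e\<in>arcs G. u e \<noteq> 0}"
  have fF: "finite F" by (simp add: F_def)
  have "k \<le> card F \<Longrightarrow> \<exists>Z. conf u Z \<and> k \<le> card {e\<in>F. Z e \<noteq> 0}" for k
  proof (induction k)
    case 0 then show ?case using zero_Lam by (intro exI[of _ "\<lambda>e. 0"]) (auto simp: conf_def)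
  next
    case (Suc k)
    then obtain Z where Z: "conf u Z" "k \<le> card {e\<in>F. Z e \<noteq> 0}" by auto
    show ?case
    proof (cases "F \<subseteq> {e. Z e \<noteq> 0}")
      case True
      then have "{e\<in>F. Z e \<noteq> 0} = F" by auto
      then show ?thesis using Z Suc.prems by auto
    next
      case False
      then obtain f where f: "f \<in> F" "Z f = 0" by auto
      then obtain Z' where Z': "conf u Z'" "Z' f \<noteq> 0" "\<forall>e\<in>arcs G. u e \<noteq> 0 \<longrightarrow> Z e \<noteq> 0 \<longrightarrow> Z' e \<noteq> 0"
        using aug_step[OF min Z(1)] by (auto simp: F_def)
      have "insert f {e\<in>F. Z e \<noteq> 0} \<subseteq> {e\<in>F. Z' e \<noteq> 0}" using Z' f by (auto simp: F_def)
      moreover have "f \<notin> {e\<in>F. Z e \<noteq> 0}" using f by auto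
      ultimately have "Suc (card {e\<in>F. Z e \<noteq> 0}) \<le> card {e\<in>F. Z' e \<noteq> 0}"
      proof -
        have "card (insert f {e\<in>F. Z e \<noteq> 0}) = Suc (card {e\<in>F. Z e \<noteq> 0})"
          by (rule card_insert_disjoint) (use fF \<open>f \<notin> _\<close> in auto)
        moreover have "card (insert f {e\<in>F. Z e \<noteq> 0}) \<le> card {e\<in>F. Z' e \<noteq> 0}"
          by (rule card_mono) (use fF \<open>insert f _ \<subseteq> _\<close> in auto)
        ultimately show ?thesis by simp
      qed
      then show ?thesis using Z' Z(2) by (intro exI[of _ Z']) auto
    qed
  qed
  then obtain Z where Z: "conf u Z" "card F \<le> card {e\<in>F. Z e \<noteq> 0}" by blast
  have "{e\<in>F. Z e \<noteq> 0} = F"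
    by (rule card_seteq[OF fF _ Z(2)]) auto
  then have ZF: "\<forall>e\<in>arcs G. u e \<noteq> 0 \<longrightarrow> Z e = sgn (u e)"
    using Z(1) by (auto simp: conf_def F_def)
  have "(\<Sum>e\<in>arcs G. Z e * u e) = (\<Sum>e\<in>arcs G. \<bar>u e\<bar>)"
  proof (rule sum.cong)
    fix e assume "e \<in> arcs G"
    then show "Z e * u e = \<bar>u e\<bar>" using ZF by (cases "u e = 0") (auto simp: sgn_mult_self_eq abs_sgn)
  qed simp
  then show ?thesis using Z(1) by (auto simp: conf_def)
qed

end



context fin_digraph begin

definition cnt :: "('b \<Rightarrow> int) \<Rightarrow> nat" where
  "cnt Z = card {Z'\<in>Lam. supp Z' = supp Z}"

definition wq :: "('b \<Rightarrow> int) \<Rightarrow> rat" where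
  "wq Z = 1 / (of_nat (card E2) * of_nat (cnt Z))"

definition Qm :: "'b \<Rightarrow> 'b \<Rightarrow> rat" where
  "Qm e f = 2 * (\<Sum>Z\<in>Lam. wq Z * of_int (Z e) * of_int (Z f))"

definition pr :: "('b \<Rightarrow> int) \<Rightarrow> ('b \<Rightarrow> real) \<Rightarrow> real" where
  "pr Z v = (\<Sum>e\<in>arcs G. of_int (Z e) * v e)"

definition qv :: "('b \<Rightarrow> real) \<Rightarrow> real" where
  "qv v = 2 * (\<Sum>Z\<in>Lam. real_of_rat (wq Z) * (pr Z v)\<^sup>2)"

lemma card_E2_pos: "card E2 > 0"
  using finite_E2 empty_E2 card_gt_0_iff by blast

lemma cnt_pos: "Z \<in> Lam \<Longrightarrow> cnt Z > 0"
  unfolding cnt_def using finite_Lam by (subst card_gt_0_iff) auto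

lemma wq_pos: "Z \<in> Lam \<Longrightarrow> real_of_rat (wq Z) > 0"
  using cnt_pos[of Z] card_E2_pos by (simp add: wq_def of_rat_divide of_rat_mult)

lemma wq_real: "real_of_rat (wq Z) = 1 / (real (card E2) * real (cnt Z))"
  by (simp add: wq_def of_rat_divide of_rat_mult)

lemma qform_eq: "qform G Qm v = qv v"
proof -
  define r where "r = (\<lambda>Z. real_of_rat (wq Z))"
  have "qform G Qm v = (\<Sum>e\<in>arcs G. \<Sum>f\<in>arcs G. \<Sum>Z\<in>Lam. 2 * r Z * ((of_int (Z e) * v e) * (of_int (Z f) * v f)))"
    unfolding qform_def Qm_def r_def
    by (simp add: of_rat_sum of_rat_mult sum_distrib_left sum_distrib_right mult_ac)
  also have "\<dots> = (\<Sum>e\<in>arcs G. \<Sum>Z\<in>Lam. \<Sum>f\<in>arcs G. 2 * r Z * ((of_int (Z e) * v e) * (of_int (Z f) * v f)))"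
    by (rule sum.cong[OF HOL.refl], rule sum.swap)
  also have "\<dots> = (\<Sum>Z\<in>Lam. \<Sum>e\<in>arcs G. \<Sum>f\<in>arcs G. 2 * r Z * ((of_int (Z e) * v e) * (of_int (Z f) * v f)))"
    by (rule sum.swap)
  also have "\<dots> = (\<Sum>Z\<in>Lam. 2 * r Z * (pr Z v)\<^sup>2)"
  proof (rule sum.cong[OF HOL.refl])
    fix Z
    have "(pr Z v)\<^sup>2 = (\<Sum>e\<in>arcs G. \<Sum>f\<in>arcs G. (of_int (Z e) * v e) * (of_int (Z f) * v f))"
      unfolding pr_def power2_eq_square by (rule sum_product)
    then show "(\<Sum>e\<in>arcs G. \<Sum>f\<in>arcs G. 2 * r Z * ((of_int (Z e) * v e) * (of_int (Z f) * v f))) = 2 * r Z * (pr Z v)\<^sup>2"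
      by (simp add: sum_distrib_left)
  qed
  finally show ?thesis unfolding qv_def r_def by (simp add: sum_distrib_left mult_ac)
qed

lemma grouping:
  "(\<Sum>Z\<in>Lam. real_of_rat (wq Z) * h (supp Z)) = (\<Sum>S\<in>E2. h S) / real (card E2)"
proof -
  have "(\<Sum>Z\<in>Lam. real_of_rat (wq Z) * h (supp Z))
      = (\<Sum>S\<in>E2. \<Sum>Z\<in>{Z\<in>Lam. supp Z = S}. real_of_rat (wq Z) * h (supp Z))"
    by (rule sum.group[symmetric]) (use finite_Lam finite_E2 supp_E2 in auto)
  also have "\<dots> = (\<Sum>S\<in>E2. h S / real (card E2))"
  proof (rule sum.cong[OF HOL.refl])
    fix S assume S: "S \<in> E2"
    define C where "C = {Z\<in>Lam. supp Z = S}"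
    have fC: "finite C" using finite_Lam by (simp add: C_def)
    have "C \<noteq> {}" using euler_lift[OF S] by (auto simp: C_def)
    then have cC: "card C > 0" using fC by auto
    have "(\<Sum>Z\<in>C. real_of_rat (wq Z) * h (supp Z)) = (\<Sum>Z\<in>C. h S / (real (card E2) * real (card C)))"
      by (rule sum.cong[OF HOL.refl]) (auto simp: C_def wq_real cnt_def)
    also have "\<dots> = h S / real (card E2)" using cC by simp
    finally show "(\<Sum>Z\<in>{Z\<in>Lam. supp Z = S}. real_of_rat (wq Z) * h (supp Z)) = h S / real (card E2)"
      by (simp add: C_def)
  qed
  also have "\<dots> = (\<Sum>S\<in>E2. h S) / real (card E2)" by (simp add: sum_divide_distrib)
  finally show ?thesis .
qed

lemma Qm_sym2: "Qm \<in> sym2_H1 G"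
  unfolding sym2_H1_def
proof (intro CollectI conjI allI)
  fix e f show "Qm e f = Qm f e" by (simp add: Qm_def mult_ac)
next
  fix f
  show "(\<lambda>e. Qm e f) \<in> cycle_space_rat G"
    unfolding cycle_space_rat_def
  proof (intro CollectI conjI allI impI ballI)
    fix e assume "e \<notin> arcs G"
    then show "Qm e f = 0" unfolding Qm_def
      by (intro mult_eq_0_iff[THEN iffD2] disjI2 sum.neutral) (auto simp: Lam_def)
  next
    fix x assume x: "x \<in> verts G"
    have "divg (\<lambda>e. Qm e f) x = divg (\<lambda>e. \<Sum>Z\<in>Lam. (2 * wq Z * of_int (Z f)) * of_int (Z e)) x"
      unfolding Qm_def by (simp add: sum_distrib_left mult_ac)
    also have "\<dots> = (\<Sum>Z\<in>Lam. divg (\<lambda>e. (2 * wq Z * of_int (Z f)) * of_int (Z e)) x)"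
      by (rule divg_sum[OF finite_Lam])
    also have "\<dots> = 0"
      using x by (intro sum.neutral) (auto simp: divg_cmult divg_of_int Lam_def)
    finally show "(\<Sum>e\<in>arcs G. (if head G e = x then Qm e f else 0) - (if tail G e = x then Qm e f else 0)) = 0"
      by (simp add: divg_def)
  qed
qed

lemma qv_nonneg_terms: "Z \<in> Lam \<Longrightarrow> 0 \<le> real_of_rat (wq Z) * (pr Z v)\<^sup>2"
  using wq_pos[of Z] by simp

lemma pos: assumes "v \<notin> cobdry_real G" shows "qv v > 0"
proof -
  have "\<exists>Z\<in>Lam. pr Z v \<noteq> 0"
  proof (rule ccontr)
    assume "\<not> ?thesis"
    then have "\<And>Z. Z \<in> Lam \<Longrightarrow> (\<Sum>e\<in>arcs G. of_int (Z e) * v e) = 0" by (auto simp: pr_def)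
    then obtain p :: "'a \<Rightarrow> real" where "\<forall>e\<in>arcs G. v e - (p (head G e) - p (tail G e)) = 0"
      using duality[of "\<lambda>a. a = 0" v] by auto
    then have "v \<in> cobdry_real G" by (auto simp: cobdry_real_def)
    with assms show False by simp
  qed
  then obtain Z where Z: "Z \<in> Lam" "pr Z v \<noteq> 0" by blast
  have "0 < (\<Sum>Z\<in>Lam. real_of_rat (wq Z) * (pr Z v)\<^sup>2)"
    by (rule sum_pos2[OF finite_Lam Z(1)]) (use wq_pos[OF Z(1)] Z(2) qv_nonneg_terms in auto)
  then show ?thesis by (simp add: qv_def)
qed

lemma coedge_val:
  assumes e: "e \<in> arcs G" and nb: "\<not> is_bridge G e"
  shows "qv (\<lambda>x. of_int (coedge e x)) = 1"
proof -
  have pr1: "(pr Z (\<lambda>x. of_int (coedge e x)))\<^sup>2 = (if e \<in> supp Z then 1 else 0)" if Z: "Z \<in> Lam" for Z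
  proof -
    have "pr Z (\<lambda>x. of_int (coedge e x)) = of_int (Z e)"
      unfolding pr_def coedge_def using e by (simp add: sum.delta' if_distrib cong: if_cong)
    moreover have "Z e \<in> {-1,0,1}" using Z by (auto simp: Lam_def)
    ultimately show ?thesis using e by (auto simp: supp_def)
  qed
  have "qv (\<lambda>x. of_int (coedge e x)) = 2 * (\<Sum>Z\<in>Lam. real_of_rat (wq Z) * (if e \<in> supp Z then 1 else 0))"
    unfolding qv_def by (simp add: pr1)
  also have "\<dots> = 2 * ((\<Sum>S\<in>E2. (if e \<in> S then 1 else 0)) / real (card E2))"
    by (subst grouping) simp
  also have "(\<Sum>S\<in>E2. (if e \<in> S then 1 else 0)) = real (card {S\<in>E2. e \<in> S})"
    using finite_E2 by (simp add: sum.If_cases Int_def)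
  also have "2 * card {S\<in>E2. e \<in> S} = card E2"
  proof -
    obtain S0 where "S0 \<in> E2" "e \<in> S0" using nonbridge_E2[OF e nb] by blast
    then show ?thesis
      by (intro half_count[OF finite_E2 E2_sd]) (auto simp: sd_def)
  qed
  then have "real (card {S\<in>E2. e \<in> S}) = real (card E2) / 2" by (metis of_nat_mult of_nat_numeral nonzero_mult_div_cancel_left zero_neq_numeral)
  finally show ?thesis using card_E2_pos by simp
qed

end



context fin_digraph begin

definition pri :: "('b \<Rightarrow> int) \<Rightarrow> ('b \<Rightarrow> int) \<Rightarrow> int" where
  "pri Z v = (\<Sum>e\<in>arcs G. Z e * v e)"

lemma pr_of_int: "pr Z (\<lambda>x. of_int (v x)) = of_int (pri Z v)"
  by (simp add: pr_def pri_def)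

lemma qv_int: "qv (\<lambda>x. of_int (v x)) = 2 * (\<Sum>Z\<in>Lam. real_of_rat (wq Z) * (of_int (pri Z v))\<^sup>2)"
  by (simp add: qv_def pr_of_int)

lemma pri_parity:
  assumes Z: "Z \<in> Lam"
  shows "even (pri Z v) \<longleftrightarrow> even (\<Sum>e\<in>supp Z. v e)"
proof -
  have "pri Z v = (\<Sum>e\<in>supp Z. Z e * v e)"
    unfolding pri_def by (rule sum.mono_neutral_right) (auto simp: supp_def)
  moreover have "even ((\<Sum>e\<in>supp Z. Z e * v e) - (\<Sum>e\<in>supp Z. v e))"
  proof -
    have "(\<Sum>e\<in>supp Z. Z e * v e) - (\<Sum>e\<in>supp Z. v e) = (\<Sum>e\<in>supp Z. Z e * v e - v e)"
      by (simp add: sum_subtractf)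
    also have "even \<dots>"
    proof (rule dvd_sum)
      fix e assume "e \<in> supp Z"
      then have "Z e = 1 \<or> Z e = -1" using Z by (auto simp: supp_def Lam_def)
      then show "2 dvd (Z e * v e - v e)" by auto
    qed
    finally show ?thesis .
  qed
  ultimately have "even (pri Z v - (\<Sum>e\<in>supp Z. v e))" by simp
  then show ?thesis by (simp add: even_diff even_add)
qed

lemma parity_add:
  fixes v :: "'b \<Rightarrow> int"
  assumes "finite S" "finite T"
  shows "odd (\<Sum>e\<in>sd S T. v e) = (odd (\<Sum>e\<in>S. v e) \<noteq> odd (\<Sum>e\<in>T. v e))"
proof -
  have a: "(\<Sum>e\<in>sd S T. v e) = (\<Sum>e\<in>S - T. v e) + (\<Sum>e\<in>T - S. v e)"
    unfolding sd_def by (rule sum.union_disjoint) (use assms in auto)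
  have b: "(\<Sum>e\<in>S. v e) = (\<Sum>e\<in>S - T. v e) + (\<Sum>e\<in>S \<inter> T. v e)"
  proof -
    have "(\<Sum>e\<in>S. v e) = (\<Sum>e\<in>S - (S \<inter> T). v e) + (\<Sum>e\<in>S \<inter> T. v e)"
      by (rule sum.subset_diff) (use assms in auto)
    moreover have "S - (S \<inter> T) = S - T" by auto
    ultimately show ?thesis by simp
  qed
  have c: "(\<Sum>e\<in>T. v e) = (\<Sum>e\<in>T - S. v e) + (\<Sum>e\<in>S \<inter> T. v e)"
  proof -
    have "(\<Sum>e\<in>T. v e) = (\<Sum>e\<in>T - (S \<inter> T). v e) + (\<Sum>e\<in>S \<inter> T. v e)"
      by (rule sum.subset_diff) (use assms in auto)
    moreover have "T - (S \<inter> T) = T - S" by auto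
    ultimately show ?thesis by simp
  qed
  have "(\<Sum>e\<in>sd S T. v e) = (\<Sum>e\<in>S. v e) + (\<Sum>e\<in>T. v e) - 2 * (\<Sum>e\<in>S \<inter> T. v e)"
    using a b c by simp
  then show ?thesis by simp
qed

lemma sq_ge1: "(k::int) \<noteq> 0 \<Longrightarrow> (1::real) \<le> (of_int k)\<^sup>2"
proof -
  assume "k \<noteq> 0"
  then have "(1::real) \<le> of_int \<bar>k\<bar>" by linarith
  then have "(1::real) \<le> (of_int \<bar>k\<bar>)\<^sup>2" by (rule one_le_power)
  then show ?thesis by (simp add: power2_abs)
qed

lemma odd_case:
  fixes v :: "'b \<Rightarrow> int"
  assumes S0: "S0 \<in> E2" "odd (\<Sum>e\<in>S0. v e)"
  shows "qv (\<lambda>x. of_int (v x)) \<ge> 1 \<and> (qv (\<lambda>x. of_int (v x)) = 1 \<longrightarrow> (\<forall>Z\<in>Lam. \<bar>pri Z v\<bar> \<le> 1))"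
proof -
  define ind where "ind = (\<lambda>S. if odd (\<Sum>e\<in>S. v e) then 1 else (0::real))"
  have hc: "2 * card {S\<in>E2. odd (\<Sum>e\<in>S. v e)} = card E2"
  proof (rule half_count[where \<phi>="\<lambda>S. odd (\<Sum>e\<in>S. v e)", OF finite_E2 E2_sd])
    fix S T assume "S \<in> E2" "T \<in> E2"
    then have "finite S" "finite T" by (auto simp: E2_def intro: finite_subset)
    then show "odd (\<Sum>e\<in>sd S T. v e) = (odd (\<Sum>e\<in>S. v e) \<noteq> odd (\<Sum>e\<in>T. v e))"
      by (rule parity_add)
  qed (use S0 in auto)
  have "2 * (\<Sum>Z\<in>Lam. real_of_rat (wq Z) * ind (supp Z)) = 2 * ((\<Sum>S\<in>E2. ind S) / real (card E2))"
    by (simp add: grouping)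
  also have "(\<Sum>S\<in>E2. ind S) = real (card {S\<in>E2. odd (\<Sum>e\<in>S. v e)})"
    unfolding ind_def by (simp add: sum.inter_filter[OF finite_E2, symmetric])
  also have "2 * (\<dots> / real (card E2)) = 1"
  proof -
    have "real (2 * card {S\<in>E2. odd (\<Sum>e\<in>S. v e)}) = real (card E2)"
      using hc by (simp only: of_nat_eq_iff)
    then have "2 * real (card {S\<in>E2. odd (\<Sum>e\<in>S. v e)}) = real (card E2)" by simp
    moreover have "real (card E2) > 0" using card_E2_pos by simp
    ultimately show ?thesis by simp
  qed
  finally have one: "2 * (\<Sum>Z\<in>Lam. real_of_rat (wq Z) * ind (supp Z)) = 1" .
  have trm: "ind (supp Z) \<le> (of_int (pri Z v))\<^sup>2" if "Z \<in> Lam" for Z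
  proof (cases "odd (\<Sum>e\<in>supp Z. v e)")
    case True
    then have "pri Z v \<noteq> 0" using pri_parity[OF that, of v] by auto
    then have "(1::real) \<le> (of_int (pri Z v))\<^sup>2" by (rule sq_ge1)
    then show ?thesis using True by (simp add: ind_def)
  qed (simp add: ind_def)
  define D where "D = (\<lambda>Z. real_of_rat (wq Z) * ((of_int (pri Z v))\<^sup>2 - ind (supp Z)))"
  have Dnn: "Z \<in> Lam \<Longrightarrow> 0 \<le> D Z" for Z
    using trm[of Z] wq_pos[of Z] by (simp add: D_def)
  have qv_eq: "qv (\<lambda>x. of_int (v x)) = 1 + 2 * (\<Sum>Z\<in>Lam. D Z)"
    unfolding qv_int D_def using one by (simp add: algebra_simps sum_subtractf)
  have "0 \<le> (\<Sum>Z\<in>Lam. D Z)" by (rule sum_nonneg) (rule Dnn)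
  then have ge: "qv (\<lambda>x. of_int (v x)) \<ge> 1" using qv_eq by simp
  moreover have "\<forall>Z\<in>Lam. \<bar>pri Z v\<bar> \<le> 1" if q1: "qv (\<lambda>x. of_int (v x)) = 1"
  proof
    fix Z assume Z: "Z \<in> Lam"
    have "(\<Sum>Z\<in>Lam. D Z) = 0" using q1 qv_eq by simp
    then have "D Z = 0" using sum_nonneg_eq_0_iff[OF finite_Lam, of D] Dnn Z by blast
    then have "(of_int (pri Z v))\<^sup>2 = ind (supp Z)" using wq_pos[OF Z] by (simp add: D_def)
    then have "(of_int (pri Z v) :: real)\<^sup>2 \<le> 1" by (simp add: ind_def)
    then have "\<bar>of_int (pri Z v) :: real\<bar> \<le> 1" by (simp add: abs_square_le_1)
    then show "\<bar>pri Z v\<bar> \<le> 1" by linarith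
  qed
  ultimately show ?thesis by blast
qed

lemma cobdry_pri: "v \<in> cobdry_int G \<Longrightarrow> Z \<in> Lam \<Longrightarrow> pri Z v = 0"
proof -
  assume "v \<in> cobdry_int G" "Z \<in> Lam"
  then obtain f where f: "\<forall>e\<in>arcs G. v e = f (head G e) - f (tail G e)" by (auto simp: cobdry_int_def)
  have "pri Z v = (\<Sum>e\<in>arcs G. Z e * (f (head G e) - f (tail G e)))"
    unfolding pri_def using f by simp
  also have "\<dots> = 0" by (rule telescope_zero) (use \<open>Z \<in> Lam\<close> in \<open>simp add: Lam_def\<close>)
  finally show ?thesis .
qed

lemma nonzero_pri: "v \<notin> cobdry_int G \<Longrightarrow> \<exists>Z\<in>Lam. pri Z v \<noteq> 0"
proof (rule ccontr)
  assume v: "v \<notin> cobdry_int G" and "\<not> (\<exists>Z\<in>Lam. pri Z v \<noteq> 0)"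
  then have "\<And>Z. Z \<in> Lam \<Longrightarrow> (\<Sum>e\<in>arcs G. of_int (Z e) * v e) = 0" by (auto simp: pri_def)
  then obtain p :: "'a \<Rightarrow> int" where "\<forall>e\<in>arcs G. v e - (p (head G e) - p (tail G e)) = 0"
    using duality[of "\<lambda>a. a = 0" v] by auto
  then have "v \<in> cobdry_int G" by (auto simp: cobdry_int_def)
  with v show False by simp
qed

definition cc :: real where "cc = 2 / (real (card E2) * real (card Lam))"

lemma cc_pos: "cc > 0"
proof -
  have "card Lam > 0" using finite_Lam zero_Lam card_gt_0_iff by blast
  then show ?thesis using card_E2_pos by (simp add: cc_def)
qed

lemma lowc: "v \<notin> cobdry_int G \<Longrightarrow> qv (\<lambda>x. of_int (v x)) \<ge> cc"
proof -
  assume "v \<notin> cobdry_int G"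
  then obtain Z where Z: "Z \<in> Lam" "pri Z v \<noteq> 0" using nonzero_pri by blast
  have "(1::real) \<le> (of_int (pri Z v))\<^sup>2" using Z(2) by (rule sq_ge1)
  moreover have "cnt Z \<le> card Lam" unfolding cnt_def by (rule card_mono[OF finite_Lam]) auto
  then have "1 / (real (card E2) * real (card Lam)) \<le> real_of_rat (wq Z)"
    using cnt_pos[OF Z(1)] card_E2_pos unfolding wq_real
    by (intro divide_left_mono mult_left_mono) auto
  ultimately have "1 / (real (card E2) * real (card Lam)) \<le> real_of_rat (wq Z) * (of_int (pri Z v))\<^sup>2"
    using wq_pos[OF Z(1)] by (metis mult.right_neutral mult_left_mono order_trans less_imp_le)
  also have "\<dots> \<le> (\<Sum>Z\<in>Lam. real_of_rat (wq Z) * (of_int (pri Z v))\<^sup>2)"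
    by (rule member_le_sum[OF Z(1)]) (auto intro!: mult_nonneg_nonneg less_imp_le[OF wq_pos] simp: finite_Lam)
  finally show ?thesis unfolding qv_int cc_def by simp
qed

lemma even_case:
  fixes v :: "'b \<Rightarrow> int"
  assumes v: "v \<notin> cobdry_int G" and ev: "\<forall>S\<in>E2. even (\<Sum>e\<in>S. v e)"
  shows "\<exists>w. w \<notin> cobdry_int G \<and> qv (\<lambda>x. of_int (v x)) = 4 * qv (\<lambda>x. of_int (w x))"
proof -
  have "\<And>Z. Z \<in> Lam \<Longrightarrow> even (\<Sum>e\<in>arcs G. of_int (Z e) * v e)"
    using pri_parity ev supp_E2 by (simp add: pri_def)
  then obtain p :: "'a \<Rightarrow> int" where p: "\<forall>e\<in>arcs G. even (v e - (p (head G e) - p (tail G e)))"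
    using duality[of even v] by auto
  define w where "w = (\<lambda>e. (v e - (p (head G e) - p (tail G e))) div 2)"
  have vw: "v e = (p (head G e) - p (tail G e)) + 2 * w e" if "e \<in> arcs G" for e
    using p that by (simp add: w_def)
  have "pri Z v = 2 * pri Z w" if Z: "Z \<in> Lam" for Z
  proof -
    have "pri Z v = (\<Sum>e\<in>arcs G. Z e * (p (head G e) - p (tail G e))) + (\<Sum>e\<in>arcs G. 2 * (Z e * w e))"
      unfolding pri_def by (simp add: vw sum.distrib[symmetric] algebra_simps)
    also have "(\<Sum>e\<in>arcs G. Z e * (p (head G e) - p (tail G e))) = 0"
      by (rule telescope_zero) (use Z in \<open>simp add: Lam_def\<close>)
    finally show ?thesis by (simp add: pri_def sum_distrib_left)
  qed
  then have q4: "qv (\<lambda>x. of_int (v x)) = 4 * qv (\<lambda>x. of_int (w x))"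
    unfolding qv_int by (simp add: sum_distrib_left power_mult_distrib algebra_simps cong: sum.cong)
  have "w \<notin> cobdry_int G"
  proof
    assume "w \<in> cobdry_int G"
    then obtain f where f: "\<forall>e\<in>arcs G. w e = f (head G e) - f (tail G e)" by (auto simp: cobdry_int_def)
    have "\<forall>e\<in>arcs G. v e = (\<lambda>x. p x + 2 * f x) (head G e) - (\<lambda>x. p x + 2 * f x) (tail G e)"
      using vw f by (simp add: algebra_simps)
    then have "v \<in> cobdry_int G" unfolding cobdry_int_def
      by (intro CollectI exI[of _ "\<lambda>x. p x + 2 * f x"]) simp
    with v show False by simp
  qed
  with q4 show ?thesis by blast
qed

lemma int_bound:
  fixes v :: "'b \<Rightarrow> int"
  assumes v: "v \<notin> cobdry_int G"
  shows "qv (\<lambda>x. of_int (v x)) \<ge> 1 \<and> (qv (\<lambda>x. of_int (v x)) = 1 \<longrightarrow> (\<forall>Z\<in>Lam. \<bar>pri Z v\<bar> \<le> 1))"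
proof -
  have main: "\<forall>v. v \<notin> cobdry_int G \<and> qv (\<lambda>x. of_int (v x)) \<le> cc * 4 ^ n \<longrightarrow>
     qv (\<lambda>x. of_int (v x)) \<ge> 1 \<and> (qv (\<lambda>x. of_int (v x)) = 1 \<longrightarrow> (\<forall>Z\<in>Lam. \<bar>pri Z v\<bar> \<le> 1))" for n
  proof (induction n)
    case 0
    show ?case
    proof (intro allI impI)
      fix v :: "'b \<Rightarrow> int" assume a: "v \<notin> cobdry_int G \<and> qv (\<lambda>x. of_int (v x)) \<le> cc * 4 ^ 0"
      show "qv (\<lambda>x. of_int (v x)) \<ge> 1 \<and> (qv (\<lambda>x. of_int (v x)) = 1 \<longrightarrow> (\<forall>Z\<in>Lam. \<bar>pri Z v\<bar> \<le> 1))"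
      proof (cases "\<exists>S\<in>E2. odd (\<Sum>e\<in>S. v e)")
        case True then show ?thesis using odd_case by blast
      next
        case False
        then obtain w where "w \<notin> cobdry_int G" "qv (\<lambda>x. of_int (v x)) = 4 * qv (\<lambda>x. of_int (w x))"
          using even_case a by blast
        moreover have "qv (\<lambda>x. of_int (w x)) \<ge> cc" using lowc calculation(1) by blast
        ultimately show ?thesis using a cc_pos by auto
      qed
    qed
  next
    case (Suc n)
    show ?case
    proof (intro allI impI)
      fix v :: "'b \<Rightarrow> int" assume a: "v \<notin> cobdry_int G \<and> qv (\<lambda>x. of_int (v x)) \<le> cc * 4 ^ Suc n"
      show "qv (\<lambda>x. of_int (v x)) \<ge> 1 \<and> (qv (\<lambda>x. of_int (v x)) = 1 \<longrightarrow> (\<forall>Z\<in>Lam. \<bar>pri Z v\<bar> \<le> 1))"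
      proof (cases "\<exists>S\<in>E2. odd (\<Sum>e\<in>S. v e)")
        case True then show ?thesis using odd_case by blast
      next
        case False
        then obtain w where w: "w \<notin> cobdry_int G" "qv (\<lambda>x. of_int (v x)) = 4 * qv (\<lambda>x. of_int (w x))"
          using even_case a by blast
        then have "qv (\<lambda>x. of_int (w x)) \<le> cc * 4 ^ n" using a by simp
        then have "qv (\<lambda>x. of_int (w x)) \<ge> 1" using Suc.IH w(1) by blast
        then show ?thesis using w(2) by simp
      qed
    qed
  qed
  obtain n where "qv (\<lambda>x. of_int (v x)) / cc < 4 ^ n" using real_arch_pow[of 4] by auto
  then have "qv (\<lambda>x. of_int (v x)) \<le> cc * 4 ^ n" using cc_pos by (simp add: field_simps)
  then show ?thesis using main v by blast
qed

lemma strong_cond: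
  fixes v :: "'b \<Rightarrow> int"
  assumes q1: "qv (\<lambda>x. of_int (v x)) = 1"
  shows "\<exists>e\<in>arcs G. (\<lambda>x. v x - coedge e x) \<in> cobdry_int G \<or> (\<lambda>x. - v x - coedge e x) \<in> cobdry_int G"
proof -
  have v: "v \<notin> cobdry_int G"
  proof
    assume "v \<in> cobdry_int G"
    then have "qv (\<lambda>x. of_int (v x)) = 0" unfolding qv_int using cobdry_pri by simp
    with q1 show False by simp
  qed
  then have bnd: "\<forall>Z\<in>Lam. \<bar>pri Z v\<bar> \<le> 1" using int_bound q1 by blast
  define L where "L = (\<lambda>p::'a\<Rightarrow>int. (\<Sum>e\<in>arcs G. \<bar>v e - (p (head G e) - p (tail G e))\<bar>))"
  obtain p0 where p0: "\<forall>p. nat (L p0) \<le> nat (L p)"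
    using ex_has_least_nat[of "\<lambda>p. True" "\<lambda>x. 0" "\<lambda>p. nat (L p)"] by auto
  have Lnn: "L p \<ge> 0" for p by (simp add: L_def sum_nonneg)
  define u where "u = (\<lambda>e. v e - (p0 (head G e) - p0 (tail G e)))"
  have umin: "(\<Sum>e\<in>arcs G. \<bar>u e\<bar>) \<le> (\<Sum>e\<in>arcs G. \<bar>u e - (p (head G e) - p (tail G e))\<bar>)" for p
  proof -
    have "(\<Sum>e\<in>arcs G. \<bar>u e\<bar>) = L p0" by (simp add: L_def u_def)
    moreover have "(\<Sum>e\<in>arcs G. \<bar>u e - (p (head G e) - p (tail G e))\<bar>) = L (\<lambda>x. p0 x + p x)"
      by (simp add: L_def u_def algebra_simps)
    moreover have "L p0 \<le> L (\<lambda>x. p0 x + p x)" using p0 Lnn by (metis nat_le_eq_zle)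
    ultimately show ?thesis by simp
  qed
  obtain Z where Z: "Z \<in> Lam" "(\<Sum>e\<in>arcs G. Z e * u e) = (\<Sum>e\<in>arcs G. \<bar>u e\<bar>)"
    using aug[OF umin] by blast
  have "(\<Sum>e\<in>arcs G. Z e * u e) = pri Z v"
  proof -
    have "(\<Sum>e\<in>arcs G. Z e * u e) = (\<Sum>e\<in>arcs G. Z e * v e - Z e * (p0 (head G e) - p0 (tail G e)))"
      by (simp add: u_def right_diff_distrib)
    also have "\<dots> = pri Z v - (\<Sum>e\<in>arcs G. Z e * (p0 (head G e) - p0 (tail G e)))"
      by (simp only: sum_subtractf pri_def)
    also have "(\<Sum>e\<in>arcs G. Z e * (p0 (head G e) - p0 (tail G e))) = 0"
      by (rule telescope_zero) (use Z in \<open>simp add: Lam_def\<close>)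
    finally show ?thesis by simp
  qed
  then have sle: "(\<Sum>e\<in>arcs G. \<bar>u e\<bar>) \<le> 1" using bnd Z by auto
  have "\<exists>h\<in>arcs G. u h \<noteq> 0"
  proof (rule ccontr)
    assume "\<not> ?thesis"
    then have "\<forall>e\<in>arcs G. v e = p0 (head G e) - p0 (tail G e)" by (auto simp: u_def)
    then have "v \<in> cobdry_int G" by (auto simp: cobdry_int_def)
    with v show False by simp
  qed
  then obtain h where h: "h \<in> arcs G" "u h \<noteq> 0" by blast
  have split: "(\<Sum>e\<in>arcs G. \<bar>u e\<bar>) = \<bar>u h\<bar> + (\<Sum>e\<in>arcs G - {h}. \<bar>u e\<bar>)"
    using h(1) by (simp add: sum.remove)
  have rest_nn: "0 \<le> (\<Sum>e\<in>arcs G - {h}. \<bar>u e\<bar>)" by (simp add: sum_nonneg)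
  have uh: "\<bar>u h\<bar> = 1" using sle split rest_nn h(2) by linarith
  have "(\<Sum>e\<in>arcs G - {h}. \<bar>u e\<bar>) = 0" using sle split uh rest_nn by linarith
  then have rest: "\<forall>e\<in>arcs G - {h}. u e = 0"
    using sum_nonneg_eq_0_iff[of "arcs G - {h}" "\<lambda>e. \<bar>u e\<bar>"] by auto
  show ?thesis
  proof (cases "u h = 1")
    case True
    have "\<forall>e\<in>arcs G. v e - coedge h e = p0 (head G e) - p0 (tail G e)"
      using rest True by (auto simp: coedge_def u_def)
    then show ?thesis using h(1) by (auto simp: cobdry_int_def)
  next
    case False
    then have "u h = -1" using uh by auto
    then have "\<forall>e\<in>arcs G. - v e - coedge h e = (\<lambda>x. - p0 x) (head G e) - (\<lambda>x. - p0 x) (tail G e)"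
      using rest by (auto simp: coedge_def u_def)
    then show ?thesis unfolding cobdry_int_def using h(1)
      by (intro bexI[of _ h] disjI2 CollectI exI[of _ "\<lambda>x. - p0 x"]) auto
  qed
qed

end

theorem theorem5p6:
  fixes G :: "('v,'e) pre_digraph"
  assumes "fin_digraph G"
  shows "\<exists>Q. strong_Q_emm G Q"
proof -
  interpret fin_digraph G by fact
  have "strong_Q_emm G Qm"
    unfolding strong_Q_emm_def Q_emm_def qform_eq
  proof (intro conjI allI impI ballI)
    show "Qm \<in> sym2_H1 G" by (rule Qm_sym2)
  next
    fix v assume "v \<notin> cobdry_real G" then show "qv v > 0" by (rule pos)
  next
    fix e assume "e \<in> arcs G" "\<not> is_bridge G e"
    then show "qv (\<lambda>x. of_int (coedge e x)) = 1" by (rule coedge_val)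
  next
    fix v :: "'e \<Rightarrow> int" assume "v \<notin> cobdry_int G"
    then show "qv (\<lambda>x. of_int (v x)) \<ge> 1" using int_bound by blast
  next
    fix v :: "'e \<Rightarrow> int" assume "qv (\<lambda>x. of_int (v x)) = 1"
    then show "\<exists>e\<in>arcs G. (\<lambda>x. v x - coedge e x) \<in> cobdry_int G \<or> (\<lambda>x. - v x - coedge e x) \<in> cobdry_int G"
      by (rule strong_cond)
  qed
  then show ?thesis by blast
qed



end
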